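(* For every $n\geq1$, $T_n(I-S)=(I-S)W_n$ as operators on $H^2$. Consequently $\mathrm{span}\{(I-S)h_k:k\ge2\}$ is invariant under every $T_n$, and $1-z$ is a cyclic vector for $\{T_n:n\ge1\}$ in $H^2$ (i.e. $\mathrm{span}\{1-z^n:n\ge1\}$ is dense in $H^2$).
   Context: $H^2$ is the Hardy space on the open unit disk. $S$ is the shift operator $Sf(z)=zf(z)$ on $H^2$. $T_nf(z)=f(z^n)$ and $W_nf(z)=\frac{1-z^n}{1-z}f(z^n)$ for $n\ge1$. For $k\geq 2$, $h_k(z)=\frac{1}{1-z}\big(\mathrm{Log}(1-z^k)-\mathrm{Log}(1-z)-\ln k\big)$ with $\mathrm{Log}$ the principal branch. *)

theory Defs
  imports "HOL-Complex_Analysis.Complex_Analysis"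
begin

definition taylor_coeff :: "(complex \<Rightarrow> complex) \<Rightarrow> nat \<Rightarrow> complex" where
  "taylor_coeff f n = (deriv ^^ n) f 0 / of_nat (fact n)"

text \<open>The Hardy space H^2 of the unit disk: holomorphic functions on the open unit
  disk with square-summable Taylor coefficients (values outside the disk are irrelevant).\<close>
definition H2 :: "(complex \<Rightarrow> complex) set" where
  "H2 = {f. f holomorphic_on ball 0 1 \<and> summable (\<lambda>n. (cmod (taylor_coeff f n))^2)}"

definition h2_norm :: "(complex \<Rightarrow> complex) \<Rightarrow> real" where
  "h2_norm f = sqrt (\<Sum>n. (cmod (taylor_coeff f n))^2)"

definition shiftS :: "(complex \<Rightarrow> complex) \<Rightarrow> (complex \<Rightarrow> complex)" where
  "shiftS f = (\<lambda>z. z * f z)"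

definition IminusS :: "(complex \<Rightarrow> complex) \<Rightarrow> (complex \<Rightarrow> complex)" where
  "IminusS f = (\<lambda>z. f z - shiftS f z)"

definition Top :: "nat \<Rightarrow> (complex \<Rightarrow> complex) \<Rightarrow> (complex \<Rightarrow> complex)" where
  "Top n f = (\<lambda>z. f (z ^ n))"

definition Wop :: "nat \<Rightarrow> (complex \<Rightarrow> complex) \<Rightarrow> (complex \<Rightarrow> complex)" where
  "Wop n f = (\<lambda>z. (1 - z ^ n) / (1 - z) * f (z ^ n))"

definition hk :: "nat \<Rightarrow> complex \<Rightarrow> complex" where
  "hk k z = (Ln (1 - z ^ k) - Ln (1 - z) - of_real (ln (real k))) / (1 - z)"

text \<open>Linear span (finite complex linear combinations) of the (I-S)h_k, k \<ge> 2,
  as elements of H^2, i.e. identified up to equality on the open unit disk.\<close>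
definition hspan :: "(complex \<Rightarrow> complex) set" where
  "hspan = {g. \<exists>F c. finite F \<and> F \<subseteq> {2..} \<and>
      (\<forall>z\<in>ball 0 1. g z = (\<Sum>k\<in>F. c k * IminusS (hk k) z))}"

end

theory Submission
  imports Defs
begin

lemma higher_deriv_sum_UNIV:
  fixes h :: "nat \<Rightarrow> complex \<Rightarrow> complex"
  assumes "finite N" "\<And>n. n \<in> N \<Longrightarrow> h n holomorphic_on UNIV"
  shows "(deriv ^^ m) (\<lambda>z. \<Sum>n\<in>N. h n z) w = (\<Sum>n\<in>N. (deriv ^^ m) (h n) w)"
  using assms
proof (induction N rule: finite_induct)
  case empty
  then show ?case by simp
next
  case (insert x F)
  have "(deriv ^^ m) (\<lambda>z. \<Sum>n\<in>insert x F. h n z) w = (deriv ^^ m) (\<lambda>z. h x z + (\<Sum>n\<in>F. h n z)) w"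
    using insert by simp
  also have "\<dots> = (deriv ^^ m) (h x) w + (deriv ^^ m) (\<lambda>z. \<Sum>n\<in>F. h n z) w"
    by (rule higher_deriv_add[where S=UNIV]) (use insert in \<open>auto intro!: holomorphic_intros\<close>)
  finally show ?case using insert by simp
qed

lemma tc_pow: "taylor_coeff (\<lambda>z. z ^ n) m = (if m = n then 1 else 0)"
proof -
  have "(deriv ^^ m) (\<lambda>z. (z - 0) ^ n) 0 = pochhammer (of_nat (Suc n - m)) m * (0 - 0) ^ (n - m)"
    by (rule higher_deriv_power)
  then have e: "(deriv ^^ m) (\<lambda>z. z ^ n) 0 = pochhammer (of_nat (Suc n - m)) m * (0::complex) ^ (n - m)"
    by simp
  show ?thesis
  proof (cases "m = n")
    case True
    then show ?thesis using e by (simp add: taylor_coeff_def flip: pochhammer_fact)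
  next
    case False
    show ?thesis
    proof (cases "m < n")
      case True then show ?thesis using e by (simp add: taylor_coeff_def)
    next
      case False
      with \<open>m \<noteq> n\<close> have "Suc n - m = 0" "m > 0" by auto
      then show ?thesis using e \<open>m \<noteq> n\<close> by (simp add: taylor_coeff_def pochhammer_0_left)
    qed
  qed
qed

lemma tc_poly:
  assumes "finite N" "N \<subseteq> {1..}"
  shows "taylor_coeff (\<lambda>z. \<Sum>n\<in>N. c n * (1 - z ^ n)) m
       = (if m = 0 then (\<Sum>n\<in>N. c n) else 0) - (if m \<in> N then c m else 0)"
proof -
  have "(deriv ^^ m) (\<lambda>z. \<Sum>n\<in>N. c n * (1 - z ^ n)) 0 = (\<Sum>n\<in>N. (deriv ^^ m) (\<lambda>z. c n * (1 - z ^ n)) 0)"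
    by (rule higher_deriv_sum_UNIV) (use assms in \<open>auto intro!: holomorphic_intros\<close>)
  also have "\<dots> = (\<Sum>n\<in>N. c n * ((if m = 0 then 1 else 0) - (deriv ^^ m) (\<lambda>z. z ^ n) 0))"
  proof (rule sum.cong[OF refl])
    fix n assume "n \<in> N"
    have "(deriv ^^ m) (\<lambda>z. c n * (1 - z ^ n)) 0 = c n * (deriv ^^ m) (\<lambda>z. 1 - z ^ n) 0"
      by (rule higher_deriv_cmult[where A=UNIV]) (auto intro!: holomorphic_intros)
    also have "(deriv ^^ m) (\<lambda>z::complex. 1 - z ^ n) 0 = (deriv ^^ m) (\<lambda>z. 1) 0 - (deriv ^^ m) (\<lambda>z. z ^ n) 0"
      by (subst higher_deriv_diff[where S=UNIV]) (auto intro!: holomorphic_intros)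
    finally show "(deriv ^^ m) (\<lambda>z. c n * (1 - z ^ n)) 0 = c n * ((if m = 0 then 1 else 0) - (deriv ^^ m) (\<lambda>z. z ^ n) 0)"
      by simp
  qed
  finally have e: "(deriv ^^ m) (\<lambda>z. \<Sum>n\<in>N. c n * (1 - z ^ n)) 0 = (\<Sum>n\<in>N. c n * ((if m = 0 then 1 else 0) - (deriv ^^ m) (\<lambda>z. z ^ n) 0))" .
  have p: "(deriv ^^ m) (\<lambda>z::complex. z ^ n) 0 = (if m = n then of_nat (fact m) else 0)" for n
    using tc_pow[of n m] by (auto simp: taylor_coeff_def split: if_splits)
  have "taylor_coeff (\<lambda>z. \<Sum>n\<in>N. c n * (1 - z ^ n)) m
      = (\<Sum>n\<in>N. c n * ((if m = 0 then 1 else 0) - (if m = n then 1 else 0)))"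
    unfolding taylor_coeff_def e p
    by (simp add: sum_divide_distrib divide_simps del: of_nat_fact) (auto intro!: sum.cong)
  also have "\<dots> = (if m = 0 then (\<Sum>n\<in>N. c n) else 0) - (if m \<in> N then c m else 0)"
    using assms by (auto simp: right_diff_distrib sum_subtractf if_distrib sum.delta cong: if_cong intro!: sum.cong)
  finally show ?thesis .
qed


lemma tc_diff:
  assumes "f holomorphic_on ball 0 1" "g holomorphic_on UNIV"
  shows "taylor_coeff (\<lambda>z. f z - g z) m = taylor_coeff f m - taylor_coeff g m"
proof -
  have "(deriv ^^ m) (\<lambda>z. f z - g z) 0 = (deriv ^^ m) f 0 - (deriv ^^ m) g 0"
    by (rule higher_deriv_diff[where S="ball 0 1"]) (use assms in \<open>auto intro: holomorphic_on_subset\<close>)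
  then show ?thesis by (simp add: taylor_coeff_def diff_divide_distrib)
qed

lemma sq_sum_le: "(cmod (x + y))^2 \<le> 2 * (cmod x)^2 + 2 * (cmod y)^2"
proof -
  have "cmod (x + y) \<le> cmod x + cmod y" by (rule norm_triangle_ineq)
  then have "(cmod (x + y))^2 \<le> (cmod x + cmod y)^2"
    by (intro power_mono) auto
  also have "\<dots> \<le> 2 * (cmod x)^2 + 2 * (cmod y)^2"
    using sum_squares_ge_zero[of "cmod x - cmod y" 0] by (simp add: power2_eq_square algebra_simps)
  finally show ?thesis .
qed


lemma density:
  assumes fH: "f \<in> H2" and e: "e > 0"
  shows "\<exists>N c. finite N \<and> N \<subseteq> {1..} \<and>
            h2_norm (\<lambda>z. f z - (\<Sum>n\<in>N. c n * Top n (\<lambda>w. 1 - w) z)) < e"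
proof -
  define a where "a = taylor_coeff f"
  have hol: "f holomorphic_on ball 0 1" and sa: "summable (\<lambda>m. (cmod (a m))^2)"
    using fH by (auto simp: H2_def a_def)
  define S where "S = (\<Sum>m. (cmod (a m))^2)"
  define eps where "eps = e^2"
  have eps: "eps > 0" using e by (simp add: eps_def)
  define T where "T j = (\<Sum>m. (cmod (a (m + j)))^2)" for j
  have Tj: "S = T j + (\<Sum>m<j. (cmod (a m))^2)" for j
    unfolding S_def T_def by (rule suminf_split_initial_segment[OF sa])
  have "(\<lambda>j. \<Sum>m<j. (cmod (a m))^2) \<longlonglongrightarrow> S"
    using summable_LIMSEQ[OF sa] by (simp add: S_def)
  then obtain M0 where M0: "\<And>j. j \<ge> M0 \<Longrightarrow> norm ((\<Sum>m<j. (cmod (a m))^2) - S) < eps / 8"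
    using LIMSEQ_D[of _ S "eps/8"] eps by (metis divide_pos_pos zero_less_numeral)
  define M where "M = M0"
  have TM: "T (Suc M) < eps / 8"
    using M0[of "Suc M"] Tj[of "Suc M"] by (simp add: M_def)
  define A where "A = (\<Sum>m\<le>M. a m)"
  obtain K where K: "K > M" "real K > 8 * (cmod A)^2 / eps"
  proof -
    obtain K0 :: nat where "real K0 > 8 * (cmod A)^2 / eps" using reals_Archimedean2 by blast
    then show ?thesis by (intro that[of "max K0 (Suc M)"]) auto
  qed
  have Kpos: "real K > 0" using K by simp
  define N where "N = {1..K}"
  define c where "c m = (if m \<le> M then - a m else 0) + A / of_nat K" for m
  have fin: "finite N" and Nsub: "N \<subseteq> {1..}" by (auto simp: N_def)
  define g where "g z = (\<Sum>n\<in>N. c n * (1 - z ^ n))" for z :: complex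
  have geq: "(\<lambda>z. f z - (\<Sum>n\<in>N. c n * Top n (\<lambda>w. 1 - w) z)) = (\<lambda>z. f z - g z)"
    by (simp add: Top_def g_def)
  have gh: "g holomorphic_on UNIV" unfolding g_def by (auto intro!: holomorphic_intros)
  define d where "d m = taylor_coeff (\<lambda>z. f z - g z) m" for m
  have d: "d m = a m - ((if m = 0 then (\<Sum>n\<in>N. c n) else 0) - (if m \<in> N then c m else 0))" for m
  proof -
    have 1: "d m = a m - taylor_coeff g m" using tc_diff[OF hol gh, of m] by (simp add: d_def a_def)
    have 2: "taylor_coeff g m = (if m = 0 then (\<Sum>n\<in>N. c n) else 0) - (if m \<in> N then c m else 0)"
      unfolding g_def by (rule tc_poly[OF fin Nsub])
    show ?thesis using 1 2 by simp
  qed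
  have sumc: "(\<Sum>n\<in>N. c n) = a 0"
  proof -
    have "(\<Sum>n\<in>N. c n) = (\<Sum>n\<in>{1..K}. (if n \<le> M then - a n else 0)) + of_nat K * (A / of_nat K)"
      by (simp add: c_def N_def sum.distrib)
    also have "(\<Sum>n\<in>{1..K}. (if n \<le> M then - a n else 0)) = (\<Sum>n\<in>{1..M}. - a n)"
      using K(1) by (intro sum.mono_neutral_cong_right) auto
    also have "of_nat K * (A / of_nat K) = A" using Kpos by simp
    also have "A = a 0 + (\<Sum>n\<in>{1..M}. a n)"
      unfolding A_def by (simp add: atMost_atLeast0 sum.atLeast_Suc_atMost)
    finally show ?thesis by (simp add: sum_negf)
  qed
  have d0: "d 0 = 0" using d[of 0] sumc by (simp add: N_def)
  have dmid: "d m = (if m \<le> M then 0 else a m) + A / of_nat K" if "1 \<le> m" "m \<le> K" for m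
    using d[of m] that by (simp add: N_def c_def)
  have dhi: "d m = a m" if "m > K" for m
    using d[of m] that by (simp add: N_def)
  have sdK: "summable (\<lambda>m. (cmod (d (m + Suc K)))^2)"
    using summable_ignore_initial_segment[OF sa, of "Suc K"] dhi by simp
  then have sd: "summable (\<lambda>m. (cmod (d m))^2)"
    using summable_iff_shift[of "\<lambda>m. (cmod (d m))^2" "Suc K"] by simp
  have tailK: "(\<Sum>m. (cmod (d (m + Suc K)))^2) = T (Suc K)"
    unfolding T_def using dhi by simp
  have split: "(\<Sum>m. (cmod (d m))^2) = T (Suc K) + (\<Sum>m<Suc K. (cmod (d m))^2)"
    using suminf_split_initial_segment[OF sd, of "Suc K"] tailK by simp
  have TMK: "T (Suc M) = T (Suc K) + (\<Sum>m\<in>{Suc M..<Suc K}. (cmod (a m))^2)"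
  proof -
    have "(\<Sum>m<Suc K. (cmod (a m))^2) = (\<Sum>m<Suc M. (cmod (a m))^2) + (\<Sum>m\<in>{Suc M..<Suc K}. (cmod (a m))^2)"
      unfolding lessThan_atLeast0 by (rule sum.atLeastLessThan_concat[symmetric]) (use K(1) in auto)
    then show ?thesis using Tj[of "Suc K"] Tj[of "Suc M"] by simp
  qed
  have fin_bound: "(\<Sum>m<Suc K. (cmod (d m))^2) \<le> 2 * (\<Sum>m\<in>{Suc M..<Suc K}. (cmod (a m))^2) + 2 * (cmod A)^2 / real K"
  proof -
    have "(\<Sum>m<Suc K. (cmod (d m))^2) = (\<Sum>m\<in>{1..K}. (cmod (d m))^2)"
      using d0 by (simp add: lessThan_Suc_atMost atMost_atLeast0 sum.atLeast_Suc_atMost)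
    also have "\<dots> \<le> (\<Sum>m\<in>{1..K}. 2 * (if m \<le> M then 0 else (cmod (a m))^2) + 2 * (cmod (A / of_nat K))^2)"
    proof (rule sum_mono)
      fix m assume "m \<in> {1..K}"
      then have "d m = (if m \<le> M then 0 else a m) + A / of_nat K" by (intro dmid) auto
      then show "(cmod (d m))^2 \<le> 2 * (if m \<le> M then 0 else (cmod (a m))^2) + 2 * (cmod (A / of_nat K))^2"
        using sq_sum_le[of "if m \<le> M then 0 else a m" "A / of_nat K"] by (auto split: if_splits)
    qed
    also have "\<dots> = 2 * (\<Sum>m\<in>{1..K}. (if m \<le> M then 0 else (cmod (a m))^2)) + real K * (2 * (cmod (A / of_nat K))^2)"
      by (simp add: sum.distrib sum_distrib_left)
    also have "(\<Sum>m\<in>{1..K}. (if m \<le> M then 0 else (cmod (a m))^2)) = (\<Sum>m\<in>{Suc M..<Suc K}. (cmod (a m))^2)"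
      using K(1) by (intro sum.mono_neutral_cong_right) auto
    also have "real K * (2 * (cmod (A / of_nat K))^2) = 2 * (cmod A)^2 / real K"
      using Kpos by (simp add: norm_divide power2_eq_square field_simps)
    finally show ?thesis .
  qed
  have "(cmod A)^2 / real K < eps / 8"
    using K(2) Kpos eps by (simp add: field_simps)
  moreover have "T (Suc K) \<ge> 0" unfolding T_def
    using summable_ignore_initial_segment[OF sa, of "Suc K"] by (intro suminf_nonneg) auto
  ultimately have "(\<Sum>m. (cmod (d m))^2) < eps"
    using eps split fin_bound TMK TM times_divide_eq_right[of 2 "(cmod A)^2" "real K"] by linarith
  then have "h2_norm (\<lambda>z. f z - g z) < e"
    unfolding h2_norm_def d_def[symmetric] eps_def using e
    by (metis abs_of_pos real_sqrt_abs real_sqrt_less_mono)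
  then show ?thesis using fin Nsub geq by metis
qed


lemma part1:
  assumes "z \<in> ball (0::complex) 1"
  shows "Top n (IminusS f) z = IminusS (Wop n f) z"
proof -
  have "z \<noteq> 1" using assms by auto
  then have "1 - z \<noteq> 0" by simp
  have a: "Top n (IminusS f) z = (1 - z^n) * f (z^n)"
    by (simp add: Top_def IminusS_def shiftS_def algebra_simps)
  have b: "IminusS (Wop n f) z = (1 - z) * Wop n f z"
    by (simp add: IminusS_def shiftS_def algebra_simps)
  show ?thesis using \<open>1 - z \<noteq> 0\<close> unfolding a b by (simp add: Wop_def)
qed

lemma phi:
  assumes "z \<in> ball (0::complex) 1"
  shows "IminusS (hk k) z = Ln (1 - z ^ k) - Ln (1 - z) - of_real (ln (real k))"
proof -
  have "z \<noteq> 1" using assms by auto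
  then have "1 - z \<noteq> 0" by simp
  have b: "IminusS (hk k) z = (1 - z) * hk k z"
    by (simp add: IminusS_def shiftS_def algebra_simps)
  show ?thesis using \<open>1 - z \<noteq> 0\<close> unfolding b hk_def by simp
qed

lemma phi_comp:
  assumes "z \<in> ball (0::complex) 1" "n \<ge> 1" "k \<ge> 1"
  shows "IminusS (hk k) (z ^ n) = IminusS (hk (n * k)) z - IminusS (hk n) z"
proof -
  have zn: "z ^ n \<in> ball 0 1" using assms(1,2)
    by (simp add: norm_power power_less_one_iff)
  have l: "ln (real (n * k)) = ln (real n) + ln (real k)"
    using assms by (simp add: ln_mult)
  show ?thesis
    unfolding phi[OF zn] phi[OF assms(1)] l by (simp add: power_mult)
qed

lemma aux2: "2 \<le> (n::nat) \<Longrightarrow> 2 \<le> x \<Longrightarrow> 2 \<le> n * x"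
  using mult_le_mono[of 1 n 2 x] by simp

lemma part2:
  assumes n: "n \<ge> 1" and g: "g \<in> hspan"
  shows "Top n g \<in> hspan"
proof (cases "n = 1")
  case True
  then show ?thesis using g by (simp add: Top_def)
next
  case False
  with n have n2: "n \<ge> 2" by simp
  from g obtain F c where F: "finite F" "F \<subseteq> {2..}"
    and gz: "\<forall>z\<in>ball 0 1. g z = (\<Sum>k\<in>F. c k * IminusS (hk k) z)"
    unfolding hspan_def by blast
  define F' where "F' = (\<lambda>k. n * k) ` F \<union> {n}"
  define c' where "c' m = (if m = n then - (\<Sum>k\<in>F. c k) else c (m div n))" for m
  have nnot: "n \<notin> (\<lambda>k. n * k) ` F" using F(2) n2 by auto
  have inj: "inj_on (\<lambda>k. n * k) F" using n2 by (auto simp: inj_on_def)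
  have "finite F'" "F' \<subseteq> {2..}" using F n2 unfolding F'_def
    by (auto simp: subset_iff intro: aux2)
  moreover have "\<forall>z\<in>ball 0 1. Top n g z = (\<Sum>m\<in>F'. c' m * IminusS (hk m) z)"
  proof
    fix z :: complex assume z: "z \<in> ball 0 1"
    have zn: "z ^ n \<in> ball 0 1" using z n
      by (simp add: norm_power power_less_one_iff)
    have "Top n g z = (\<Sum>k\<in>F. c k * IminusS (hk k) (z ^ n))"
      using gz zn by (simp add: Top_def)
    also have "\<dots> = (\<Sum>k\<in>F. c k * IminusS (hk (n * k)) z) - (\<Sum>k\<in>F. c k) * IminusS (hk n) z"
    proof -
      have "(\<Sum>k\<in>F. c k * IminusS (hk k) (z ^ n)) = (\<Sum>k\<in>F. c k * IminusS (hk (n * k)) z - c k * IminusS (hk n) z)"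
      proof (intro sum.cong refl)
        fix k assume "k \<in> F"
        then have "k \<ge> 1" using F(2) by auto
        then show "c k * IminusS (hk k) (z ^ n) = c k * IminusS (hk (n * k)) z - c k * IminusS (hk n) z"
          using phi_comp[OF z n] by (simp add: right_diff_distrib)
      qed
      then show ?thesis by (simp add: sum_subtractf sum_distrib_right)
    qed
    also have "(\<Sum>k\<in>F. c k * IminusS (hk (n * k)) z) = (\<Sum>m\<in>(\<lambda>k. n * k) ` F. c' m * IminusS (hk m) z)"
      using inj F(2) n2 by (subst sum.reindex) (auto simp: c'_def intro!: sum.cong)
    also have "(\<Sum>m\<in>(\<lambda>k. n * k) ` F. c' m * IminusS (hk m) z) - (\<Sum>k\<in>F. c k) * IminusS (hk n) z
        = (\<Sum>m\<in>F'. c' m * IminusS (hk m) z)"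
      unfolding F'_def using F(1) nnot by (simp add: c'_def)
    finally show "Top n g z = (\<Sum>m\<in>F'. c' m * IminusS (hk m) z)" .
  qed
  ultimately show ?thesis unfolding hspan_def by blast
qed

theorem mainTheorem7:
  shows "(\<forall>n\<ge>1. \<forall>f\<in>H2. \<forall>z\<in>ball 0 1.
            Top n (IminusS f) z = IminusS (Wop n f) z)
       \<and> (\<forall>n\<ge>1. \<forall>g\<in>hspan. Top n g \<in> hspan)
       \<and> (\<forall>f\<in>H2. \<forall>e>0. \<exists>N c. finite N \<and> N \<subseteq> {1..} \<and>
            h2_norm (\<lambda>z. f z - (\<Sum>n\<in>N. c n * Top n (\<lambda>w. 1 - w) z)) < e)"
proof (intro conjI allI impI ballI)
  fix n :: nat and f z assume "n \<ge> 1" "f \<in> H2" "z \<in> ball (0::complex) 1"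
  then show "Top n (IminusS f) z = IminusS (Wop n f) z" using part1 by blast
next
  fix n :: nat and g assume "n \<ge> 1" "g \<in> hspan"
  then show "Top n g \<in> hspan" by (rule part2)
next
  fix f :: "complex \<Rightarrow> complex" and e :: real assume "f \<in> H2" "e > 0"
  then show "\<exists>N c. finite N \<and> N \<subseteq> {1..} \<and>
            h2_norm (\<lambda>z. f z - (\<Sum>n\<in>N. c n * Top n (\<lambda>w. 1 - w) z)) < e"
    by (rule density)
qed

end
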